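(* Let $p\ge1$, $0<\alpha\le1$, and let $X$ be a random vertex of $\{0,\dots,p\}^2$ with $$\mathbb{P}[X=(i,j)]=\prod_{k\in\{i,j\}}\binom{p}{k}\frac{B(\alpha+k,\alpha+p-k)}{B(\alpha,\alpha)}.$$ Then $p^{-2}\lesssim\mathbb{P}[X=(i,j)]\lesssim p^{-2\alpha}$ for all $(i,j)\in\{0,\dots,p\}^2$.
   Context: $B(\cdot,\cdot)$ is the beta function. $f(p)\lesssim g(p)$ means $f(p)\le c\,g(p)$ for a constant $c>0$ not depending on $p$ (or on $(i,j)$). *)

theory Defs
  imports "HOL-Analysis.Analysis"
begin

definition betabin :: "nat \<Rightarrow> real \<Rightarrow> nat \<Rightarrow> real" where
  "betabin p \<alpha> k = real (p choose k) * Beta (\<alpha> + real k) (\<alpha> + real p - real k) / Beta \<alpha> \<alpha>"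

definition probX :: "nat \<Rightarrow> real \<Rightarrow> nat \<Rightarrow> nat \<Rightarrow> real" where
  "probX p \<alpha> i j = betabin p \<alpha> i * betabin p \<alpha> j"

end

theory Submission imports Defs begin

lemma Gp1: "(x::real) > 0 \<Longrightarrow> Gamma (x + 1) = x * Gamma x"
  by (rule Gamma_plus1) (auto elim!: nonpos_Ints_cases)

lemma Gfact: "Gamma (real n + 1) = fact n"
  using Gamma_fact[of n, where 'a=real] by (simp add: add.commute)

lemma G_up:
  assumes x: "(x::real) > 0" and s: "0 \<le> s" "s \<le> 1"
  shows "Gamma (x + s) \<le> Gamma x * x powr s"
proof -
  have "(ln \<circ> Gamma) ((1 - s) *\<^sub>R x + s *\<^sub>R (x+1)) \<le> (1 - s) * (ln \<circ> Gamma) x + s * (ln \<circ> Gamma) (x+1)"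
    by (rule convex_onD[OF log_convex_Gamma_real]) (use x s in auto)
  moreover have "(1 - s) *\<^sub>R x + s *\<^sub>R (x+1) = x + s" by (simp add: algebra_simps)
  moreover have "ln (Gamma (x+1)) = ln x + ln (Gamma x)" using Gp1[OF x] x Gamma_real_pos[OF x] by (simp add: ln_mult del: Gamma_real_pos)
  ultimately have "ln (Gamma (x+s)) \<le> ln (Gamma x) + s * ln x" by (simp add: algebra_simps)
  hence "exp (ln (Gamma (x+s))) \<le> exp (ln (Gamma x) + s * ln x)" by simp
  thus ?thesis using x s by (simp add: exp_add powr_def)
qed

lemma G_low:
  assumes x: "(x::real) > 0" and s: "0 \<le> s" "s \<le> 1"
  shows "Gamma x * x * (x + s) powr (s - 1) \<le> Gamma (x + s)"
proof -
  have "Gamma (x + s + (1 - s)) \<le> Gamma (x + s) * (x + s) powr (1 - s)"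
    using G_up[of "x+s" "1-s"] x s by simp
  hence "x * Gamma x \<le> Gamma (x + s) * (x + s) powr (1 - s)" using Gp1[OF x] by simp
  hence "x * Gamma x * (x + s) powr (s - 1) \<le> Gamma (x + s) * ((x + s) powr (1 - s) * (x + s) powr (s - 1))"
    using x s by (simp add: mult_right_mono mult.assoc)
  also have "(x + s) powr (1 - s) * (x + s) powr (s - 1) = 1" using x s by (simp flip: powr_add)
  finally show ?thesis by (simp add: mult_ac)
qed

definition gg :: "real \<Rightarrow> nat \<Rightarrow> real" where "gg a n = Gamma (real n + a) / fact n"
definition qq :: "real \<Rightarrow> nat \<Rightarrow> real" where "qq a n = Gamma (real n + 2 * a) / fact n"

lemma betabin_eq:
  assumes "0 < a" "k \<le> p"
  shows "betabin p a k = gg a k * gg a (p - k) / (Beta a a * qq a p)"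
proof -
  have e: "a + real p - real k = real (p - k) + a" using assms by (simp add: of_nat_diff)
  have e2: "a + real k + (real (p - k) + a) = real p + 2 * a" using assms by (simp add: of_nat_diff)
  show ?thesis unfolding betabin_def e Beta_def[of "a + real k"] e2 gg_def qq_def
    using assms by (simp add: binomial_fact field_simps add.commute)
qed

lemma gg_pos: "0 < a \<Longrightarrow> gg a n > 0" unfolding gg_def by (intro divide_pos_pos Gamma_real_pos) auto
lemma qq_pos: "0 < a \<Longrightarrow> qq a n > 0" unfolding qq_def by (intro divide_pos_pos Gamma_real_pos) auto

lemma gg_Suc:
  assumes "0 < a" "a \<le> 1" shows "gg a (Suc n) \<le> gg a n"
proof -
  have "Gamma (real (Suc n) + a) = (real n + a) * Gamma (real n + a)"
    using Gp1[of "real n + a"] assms by (simp add: add_ac)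
  hence "gg a (Suc n) = gg a n * ((real n + a) / (real n + 1))"
    unfolding gg_def by (simp add: field_simps)
  also have "\<dots> \<le> gg a n * 1"
    using assms gg_pos[of a n] by (intro mult_left_mono) auto
  finally show ?thesis by simp
qed

lemma gg_mono: assumes "0 < a" "a \<le> 1" "n \<le> m" shows "gg a m \<le> gg a n"
proof -
  have "decseq (gg a)" by (rule decseq_SucI) (use gg_Suc assms in auto)
  thus ?thesis using assms(3) by (simp add: decseq_def)
qed

lemma gg_le1: assumes "0 < a" "a \<le> 1" "n \<ge> 1" shows "gg a n \<le> real n powr (a - 1)"
proof -
  have n: "real n > 0" using assms by simp
  have "Gamma (real n + a) \<le> Gamma (real n) * real n powr a" using G_up[OF n] assms by simp
  moreover have "fact n = real n * Gamma (real n)"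
    using Gfact[of "n - 1"] Gp1[of "real (n-1)"] assms Gp1[of "real n - 1"]
    by (metis Gfact Suc_pred' diff_add_cancel le_numeral_extra(2) less_le_trans n of_nat_Suc Gp1 fact_Suc of_nat_mult zero_less_one) 
  ultimately have "gg a n \<le> Gamma (real n) * real n powr a / (real n * Gamma (real n))"
    unfolding gg_def by (metis divide_right_mono fact_ge_zero)
  also have "\<dots> = real n powr (a - 1)" using n Gamma_real_pos[OF n]
    by (simp add: powr_diff del: Gamma_real_pos)
  finally show ?thesis .
qed

lemma fact_G: assumes "n \<ge> 1" shows "(fact n :: real) = real n * Gamma (real n)"
proof -
  obtain m where m: "n = Suc m" using assms by (cases n) auto
  have "Gamma (real n) = fact m" using Gfact[of m] m by (simp add: add.commute)
  thus ?thesis using m by simp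
qed

lemma gg_M: assumes "0 < a" "a \<le> 1" shows "gg a n \<le> max 1 (Gamma a)"
proof (cases "n = 0")
  case True thus ?thesis by (simp add: gg_def)
next
  case False
  hence "gg a n \<le> real n powr (a - 1)" using gg_le1 assms by simp
  also have "\<dots> \<le> 1" using False assms using powr_mono2'[of "a-1" 1 "real n"] by auto
  finally show ?thesis by simp
qed

lemma gg_pair:
  assumes a: "0 < a" "a \<le> 1" and p: "p \<ge> 1" and k: "k \<le> p"
  shows "gg a k * gg a (p - k) \<le> max 1 (Gamma a) ^ 2 * (real p / 2) powr (a - 1)"
proof -
  define M where "M = max 1 (Gamma a)"
  have big: "gg a m \<le> M * (real p / 2) powr (a - 1)" if "2 * m \<ge> p" for m
  proof -
    have m1: "m \<ge> 1" using that p by linarith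
    have "gg a m \<le> real m powr (a - 1)" using gg_le1[OF a m1] .
    also have "\<dots> \<le> (real p / 2) powr (a - 1)"
      using that p a by (intro powr_mono2') auto
    also have "\<dots> \<le> M * (real p / 2) powr (a - 1)"
      using mult_right_mono[of 1 M "(real p / 2) powr (a - 1)"] by (simp add: M_def)
    finally show ?thesis .
  qed
  have Mg: "gg a n \<le> M" for n using gg_M[OF a] M_def by simp
  have M1: "M \<ge> 1" by (simp add: M_def)
  show ?thesis
  proof (cases "2 * k \<ge> p")
    case True
    have "gg a k * gg a (p - k) \<le> (M * (real p / 2) powr (a - 1)) * M"
      using big[OF True] Mg[of "p-k"] gg_pos[OF a(1)] M1 by (intro mult_mono) (auto intro: less_imp_le)
    thus ?thesis by (simp add: M_def power2_eq_square mult_ac)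
  next
    case False
    hence "2 * (p - k) \<ge> p" by linarith
    hence "gg a k * gg a (p - k) \<le> M * (M * (real p / 2) powr (a - 1))"
      using big Mg[of k] gg_pos[OF a(1)] M1 by (intro mult_mono) (auto intro: less_imp_le)
    thus ?thesis by (simp add: M_def power2_eq_square mult_ac)
  qed
qed

lemma gg_low:
  assumes a: "0 < a" "a \<le> 1" and p: "p \<ge> 1"
  shows "2 powr (a - 1) * real p powr (a - 1) \<le> gg a p"
proof -
  have x: "real p > 0" using p by simp
  have "Gamma (real p) * real p * (real p + a) powr (a - 1) \<le> Gamma (real p + a)"
    using G_low[OF x] a by simp
  hence "fact p * (real p + a) powr (a - 1) \<le> Gamma (real p + a)"
    using fact_G[OF p] by (simp add: mult_ac)
  hence "(real p + a) powr (a - 1) \<le> gg a p"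
    unfolding gg_def by (simp add: field_simps)
  moreover have "(2 * real p) powr (a - 1) \<le> (real p + a) powr (a - 1)"
    using a p x by (intro powr_mono2') auto
  ultimately show ?thesis by (simp add: powr_mult)
qed

lemma qq_low:
  assumes a: "0 < a" "a \<le> 1" and p: "p \<ge> 1"
  shows "3 powr (a - 1) * real p powr (2 * a - 1) \<le> qq a p"
proof -
  have x: "real p > 0" using p by simp
  have x2: "real p + a > 0" using x a by simp
  have h1: "Gamma (real p) * real p * (real p + a) powr (a - 1) \<le> Gamma (real p + a)"
    using G_low[OF x] a by simp
  have h2: "Gamma (real p + a) * (real p + a) * (real p + a + a) powr (a - 1) \<le> Gamma (real p + a + a)"
    using G_low[OF x2 less_imp_le[OF a(1)] a(2)] .
  have "fact p * ((real p + a) powr (a - 1) * (real p + a) * (real p + 2 * a) powr (a - 1))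
     = (Gamma (real p) * real p * (real p + a) powr (a - 1)) * ((real p + a) * (real p + a + a) powr (a - 1))"
    using fact_G[OF p] by (simp add: mult_ac add_ac)
  also have "\<dots> \<le> Gamma (real p + a) * ((real p + a) * (real p + a + a) powr (a - 1))"
    using h1 x2 by (intro mult_right_mono) auto
  also have "\<dots> \<le> Gamma (real p + a + a)" using h2 by (simp add: mult_ac)
  also have "real p + a + a = real p + 2 * a" by simp
  finally have "(real p + a) powr (a - 1) * (real p + a) * (real p + 2 * a) powr (a - 1) \<le> qq a p"
    unfolding qq_def by (simp add: field_simps)
  moreover have "(real p + a) powr (a - 1) * (real p + a) = (real p + a) powr a"
    using x2 by (simp add: powr_diff)
  moreover have "real p powr a \<le> (real p + a) powr a" using a x by (intro powr_mono2) auto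
  moreover have "(3 * real p) powr (a - 1) \<le> (real p + 2 * a) powr (a - 1)"
    using a p x by (intro powr_mono2') auto
  ultimately have "real p powr a * (3 * real p) powr (a - 1) \<le> qq a p"
    by (smt (verit) mult_mono powr_ge_zero)
  moreover have "real p powr a * (3 * real p) powr (a - 1) = 3 powr (a - 1) * real p powr (2 * a - 1)"
    using x by (simp add: powr_mult mult_ac flip: powr_add)
  ultimately show ?thesis by simp
qed

lemma qq_up:
  assumes a: "0 < a" "a \<le> 1" and p: "p \<ge> 1"
  shows "qq a p \<le> 2 * real p powr (2 * a - 1)"
proof -
  have x: "real p > 0" using p by simp
  have x2: "real p + a > 0" using x a by simp
  have h1: "Gamma (real p + a) \<le> Gamma (real p) * real p powr a" using G_up[OF x] a by simp
  have h2: "Gamma (real p + a + a) \<le> Gamma (real p + a) * (real p + a) powr a" using G_up[OF x2 less_imp_le[OF a(1)] a(2)] .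
  have e: "real p + 2 * a = real p + a + a" by simp
  have "Gamma (real p + 2 * a) \<le> Gamma (real p) * real p powr a * (real p + a) powr a"
    unfolding e using h2 h1 by (smt (verit) mult_right_mono powr_ge_zero)
  hence "qq a p \<le> Gamma (real p) * real p powr a * (real p + a) powr a / (real p * Gamma (real p))"
    unfolding qq_def using fact_G[OF p] by (metis divide_right_mono fact_ge_zero)
  also have "\<dots> = real p powr (a - 1) * (real p + a) powr a"
    using x Gamma_real_pos[OF x] by (simp add: powr_diff del: Gamma_real_pos)
  also have "\<dots> \<le> real p powr (a - 1) * (2 * real p) powr a"
    using a p x by (intro mult_left_mono powr_mono2) auto
  also have "\<dots> = 2 powr a * real p powr (2 * a - 1)"
    using x by (simp add: powr_mult mult_ac flip: powr_add)
  also have "\<dots> \<le> 2 * real p powr (2 * a - 1)"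
    using a powr_mono[of a 1 2] by (intro mult_right_mono) auto
  finally show ?thesis .
qed

lemma Beta_pos: "0 < a \<Longrightarrow> Beta a a > (0::real)"
  unfolding Beta_def by (intro divide_pos_pos mult_pos_pos Gamma_real_pos) auto

lemma bb_low:
  assumes a: "0 < a" "a \<le> 1" and p: "p \<ge> 1" and k: "k \<le> p"
  shows "(2 powr (a - 1)) ^ 2 / (2 * Beta a a) * real p powr (-1) \<le> betabin p a k"
proof -
  define L where "L = 2 powr (a - 1) * real p powr (a - 1)"
  have x: "real p > 0" using p by simp
  have L0: "L > 0" unfolding L_def using x by simp
  have B: "Beta a a > 0" using Beta_pos a by simp
  have g1: "L \<le> gg a k" using gg_low[OF a p] gg_mono[OF a k] unfolding L_def by linarith
  have g2: "L \<le> gg a (p - k)" using gg_low[OF a p] gg_mono[OF a, of "p-k" p] unfolding L_def by simp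
  have num: "L * L \<le> gg a k * gg a (p - k)" using g1 g2 L0 by (intro mult_mono) auto
  have den: "Beta a a * qq a p \<le> Beta a a * (2 * real p powr (2 * a - 1))"
    using qq_up[OF a p] B by (intro mult_left_mono) auto
  have "L * L / (Beta a a * (2 * real p powr (2 * a - 1))) \<le> gg a k * gg a (p - k) / (Beta a a * qq a p)"
    using num den B qq_pos[OF a(1), of p] L0 gg_pos[OF a(1), of k] gg_pos[OF a(1), of "p-k"]
    by (intro frac_le) (auto intro: mult_pos_pos)
  also have "\<dots> = betabin p a k" using betabin_eq[OF a(1) k] by simp
  also have "L * L / (Beta a a * (2 * real p powr (2 * a - 1))) = (2 powr (a - 1)) ^ 2 / (2 * Beta a a) * real p powr (-1)"
  proof -
    have "real p powr (a - 1) * real p powr (a - 1) = real p powr ((a - 1) + (a - 1))"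
      by (rule powr_add[symmetric])
    also have "\<dots> = real p powr ((2 * a - 1) + (-1))"
      by (rule arg_cong[where f="\<lambda>e. real p powr e"]) simp
    also have "\<dots> = real p powr (2 * a - 1) * real p powr (-1)" by (rule powr_add)
    finally have "real p powr (a - 1) * real p powr (a - 1) = real p powr (2 * a - 1) * real p powr (-1)" .
    thus ?thesis unfolding L_def using x B by (simp add: field_simps power2_eq_square)
  qed
  finally show ?thesis .
qed

lemma bb_up:
  assumes a: "0 < a" "a \<le> 1" and p: "p \<ge> 1" and k: "k \<le> p"
  shows "betabin p a k \<le> max 1 (Gamma a) ^ 2 * (1/2) powr (a - 1) / (Beta a a * 3 powr (a - 1)) * real p powr (-a)"
proof -
  have x: "real p > 0" using p by simp
  have B: "Beta a a > 0" using Beta_pos a by simp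
  have "betabin p a k = gg a k * gg a (p - k) / (Beta a a * qq a p)" using betabin_eq[OF a(1) k] .
  also have "\<dots> \<le> max 1 (Gamma a) ^ 2 * (real p / 2) powr (a - 1) / (Beta a a * (3 powr (a - 1) * real p powr (2 * a - 1)))"
  proof (rule frac_le)
    show "0 \<le> max 1 (Gamma a) ^ 2 * (real p / 2) powr (a - 1)" by simp
    show "gg a k * gg a (p - k) \<le> max 1 (Gamma a) ^ 2 * (real p / 2) powr (a - 1)"
      using gg_pair[OF a p k] .
    show "0 < Beta a a * (3 powr (a - 1) * real p powr (2 * a - 1))" using B x by simp
    show "Beta a a * (3 powr (a - 1) * real p powr (2 * a - 1)) \<le> Beta a a * qq a p"
      using qq_low[OF a p] B by (intro mult_left_mono) auto
  qed
  also have "\<dots> = max 1 (Gamma a) ^ 2 * (1/2) powr (a - 1) / (Beta a a * 3 powr (a - 1)) * real p powr (-a)"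
  proof -
    have "(real p / 2) powr (a - 1) = ((1/2) * real p) powr (a - 1)" by simp
    also have "\<dots> = (1/2) powr (a - 1) * real p powr (a - 1)" by (rule powr_mult)
    also have "real p powr (a - 1) = real p powr ((2 * a - 1) + (-a))"
      by (rule arg_cong[where f="\<lambda>e. real p powr e"]) simp
    also have "\<dots> = real p powr (2 * a - 1) * real p powr (-a)" by (rule powr_add)
    finally have e: "(real p / 2) powr (a - 1) = (1/2) powr (a - 1) * (real p powr (2 * a - 1) * real p powr (-a))" .
    have P: "real p powr (2 * a - 1) > 0" using x by simp
    define Q where "Q = real p powr (2 * a - 1)"
    have Q: "Q > 0" unfolding Q_def using P .
    show ?thesis unfolding e Q_def[symmetric] using Q B by (simp add: field_simps)
  qed
  finally show ?thesis .
qed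

theorem lemmaA3:
  fixes \<alpha> :: real
  assumes "0 < \<alpha>" and "\<alpha> \<le> 1"
  shows "\<exists>c C. c > 0 \<and> C > 0 \<and>
    (\<forall>p::nat. p \<ge> 1 \<longrightarrow> (\<forall>i\<le>p. \<forall>j\<le>p.
        c * real p powr (-2) \<le> probX p \<alpha> i j \<and>
        probX p \<alpha> i j \<le> C * real p powr (-2 * \<alpha>)))"
proof -
  note a = assms
  define c0 where "c0 = (2 powr (\<alpha> - 1)) ^ 2 / (2 * Beta \<alpha> \<alpha>)"
  define C0 where "C0 = max 1 (Gamma \<alpha>) ^ 2 * (1/2) powr (\<alpha> - 1) / (Beta \<alpha> \<alpha> * 3 powr (\<alpha> - 1))"
  have B: "Beta \<alpha> \<alpha> > 0" using Beta_pos a by simp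
  have c0: "c0 > 0" unfolding c0_def using B by simp
  have C0: "C0 > 0" unfolding C0_def using B by simp
  show ?thesis
  proof (intro exI conjI allI impI)
    show "c0 ^ 2 > 0" "C0 ^ 2 > 0" using c0 C0 by auto
  next
    fix p i j :: nat assume p: "p \<ge> 1" and i: "i \<le> p" and j: "j \<le> p"
    have x: "real p > 0" using p by simp
    have l1: "c0 * real p powr (-1) \<le> betabin p \<alpha> i" using bb_low[OF a p i] unfolding c0_def .
    have l2: "c0 * real p powr (-1) \<le> betabin p \<alpha> j" using bb_low[OF a p j] unfolding c0_def .
    have u1: "betabin p \<alpha> i \<le> C0 * real p powr (-\<alpha>)" using bb_up[OF a p i] unfolding C0_def .
    have u2: "betabin p \<alpha> j \<le> C0 * real p powr (-\<alpha>)" using bb_up[OF a p j] unfolding C0_def .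
    have "c0 * real p powr (-1) * (c0 * real p powr (-1)) \<le> probX p \<alpha> i j"
      unfolding probX_def using l1 l2 c0 by (intro mult_mono) (auto intro: order_trans[OF _ l1])
    moreover have "c0 * real p powr (-1) * (c0 * real p powr (-1)) = c0 ^ 2 * real p powr (-2)"
    proof -
      have "real p powr (-1) * real p powr (-1) = real p powr (-1 + -1)" by (rule powr_add[symmetric])
      also have "(-1::real) + -1 = -2" by simp
      finally have F: "real p powr (-1) * real p powr (-1) = real p powr (-2)" .
      show ?thesis by (metis F mult.assoc mult.left_commute power2_eq_square)
    qed
    ultimately show "c0 ^ 2 * real p powr (-2) \<le> probX p \<alpha> i j" by simp
    have "probX p \<alpha> i j \<le> C0 * real p powr (-\<alpha>) * (C0 * real p powr (-\<alpha>))"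
    proof -
      have "0 \<le> c0 * real p powr (-1)" using c0 by simp
      hence "0 \<le> betabin p \<alpha> j" using l2 by linarith
      moreover have "0 \<le> C0 * real p powr (-\<alpha>)" using C0 by simp
      ultimately show ?thesis unfolding probX_def using u1 u2 by (intro mult_mono) auto
    qed
    moreover have "C0 * real p powr (-\<alpha>) * (C0 * real p powr (-\<alpha>)) = C0 ^ 2 * real p powr (-2 * \<alpha>)"
    proof -
      have "real p powr (-\<alpha>) * real p powr (-\<alpha>) = real p powr (-\<alpha> + -\<alpha>)" by (rule powr_add[symmetric])
      also have "-\<alpha> + -\<alpha> = -2 * \<alpha>" by simp
      finally have F: "real p powr (-\<alpha>) * real p powr (-\<alpha>) = real p powr (-2 * \<alpha>)" .
      show ?thesis by (metis F mult.assoc mult.left_commute power2_eq_square)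
    qed
    ultimately show "probX p \<alpha> i j \<le> C0 ^ 2 * real p powr (-2 * \<alpha>)" by simp
  qed
qed

end
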